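(* Let $n\ge1$ and $P=2\lceil\log_2 n+\log_2\log_2 n\rceil+1$. Let $a_0\in[0,2]$, $a_1\in[0,P-1]$, and $\mathcal{C}'_{2,3,P}=\{\boldsymbol{z}\in\Sigma_2^n:\mathrm{VT}^{(0)}(\boldsymbol{z})\equiv a_0\pmod3,\ \mathrm{VT}^{(1)}(\boldsymbol{z})\equiv a_1\pmod P\}$. Then the code $$\mathcal{C}=\{\boldsymbol{x}\in\mathcal{ALL}(n,\tfrac{P-1}{2}):\ \mathbf{1}(\boldsymbol{x})\in\mathcal{C}'_{2,3,P}\}\subseteq\Sigma_2^n$$ is a $2$-read $(n,4)_2$-code. Moreover, there exists a choice of $a_0,a_1$ such that $r(\mathcal{C})\le\log_2\log_2n+\log_26+o(1)$ as $n\to\infty$.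
   Context: $\Sigma_2=\{0,1\}$. For $\boldsymbol{x}\in\Sigma_2^n$, $x[i]$ is its $i$-th entry, with $x[i]=0$ for $i\notin[1,n]$. $\mathrm{VT}^{(k)}(\boldsymbol{z})=\sum_{i=1}^n i^kz[i]$. The indicator sequence $\mathbf{1}(\boldsymbol{x})$ has entries $\mathbf{1}(\boldsymbol{x})[i]=x[i]+x[i-1]\bmod 2$, $i\in[1,n]$. A sequence is alternating if it has the form $abab\cdots$ with $a\ne b$; $\mathcal{ALL}(n,L)$ is the set of $\boldsymbol{x}\in\Sigma_2^n$ all of whose alternating substrings (contiguous blocks) have length at most $L$. $\mathcal{R}(\boldsymbol{x})$ is the length-$(n+1)$ vector whose $i$-th entry is the multiset $\{\{x[i-1],x[i]\}\}$; $\mathcal{C}$ is a $2$-read $(n,d)_2$-code if $d_H(\mathcal{R}(\boldsymbol{x}),\mathcal{R}(\boldsymbol{y}))\ge d$ for distinct $\boldsymbol{x},\boldsymbol{y}\in\mathcal{C}$. Redundancy: $r(\mathcal{C})=n-\log_2|\mathcal{C}|$. *)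

theory Defs
  imports Complex_Main "HOL-Library.Multiset"
begin

text \<open>Binary sequences of length n are modelled as functions nat => nat with
  values in {0,1}, 1-based indexing, and x i = 0 for i outside [1,n].\<close>

definition binseqs :: "nat \<Rightarrow> (nat \<Rightarrow> nat) set" where
  "binseqs n = {x. (\<forall>i. x i \<le> 1) \<and> (\<forall>i. (i = 0 \<or> n < i) \<longrightarrow> x i = 0)}"

definition VT :: "nat \<Rightarrow> nat \<Rightarrow> (nat \<Rightarrow> nat) \<Rightarrow> nat" where
  "VT k n z = (\<Sum>i=1..n. i ^ k * z i)"

definition indicator_seq :: "nat \<Rightarrow> (nat \<Rightarrow> nat) \<Rightarrow> (nat \<Rightarrow> nat)" where
  "indicator_seq n x = (\<lambda>i. if 1 \<le> i \<and> i \<le> n then (x i + x (i - 1)) mod 2 else 0)"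

definition alternating_block :: "(nat \<Rightarrow> nat) \<Rightarrow> nat \<Rightarrow> nat \<Rightarrow> bool" where
  "alternating_block x i j = (\<forall>k. i \<le> k \<and> k < j \<longrightarrow> x k \<noteq> x (Suc k))"

definition ALL_set :: "nat \<Rightarrow> nat \<Rightarrow> (nat \<Rightarrow> nat) set" where
  "ALL_set n L = {x \<in> binseqs n. \<forall>i j. 1 \<le> i \<and> i \<le> j \<and> j \<le> n \<and> alternating_block x i j
                                     \<longrightarrow> j - i + 1 \<le> L}"

definition read2 :: "(nat \<Rightarrow> nat) \<Rightarrow> nat \<Rightarrow> nat multiset" where
  "read2 x i = {# x (i - 1), x i #}"

definition read2_dist :: "nat \<Rightarrow> (nat \<Rightarrow> nat) \<Rightarrow> (nat \<Rightarrow> nat) \<Rightarrow> nat" where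
  "read2_dist n x y = card {i \<in> {1..n+1}. read2 x i \<noteq> read2 y i}"

definition two_read_code :: "nat \<Rightarrow> nat \<Rightarrow> (nat \<Rightarrow> nat) set \<Rightarrow> bool" where
  "two_read_code n d C \<longleftrightarrow> C \<subseteq> binseqs n \<and>
     (\<forall>x\<in>C. \<forall>y\<in>C. x \<noteq> y \<longrightarrow> d \<le> read2_dist n x y)"

definition redundancy :: "nat \<Rightarrow> (nat \<Rightarrow> nat) set \<Rightarrow> real" where
  "redundancy n C = real n - log 2 (real (card C))"

definition Pn :: "nat \<Rightarrow> nat" where
  "Pn n = nat (2 * \<lceil>log 2 (real n) + log 2 (log 2 (real n))\<rceil> + 1)"

definition Cprime :: "nat \<Rightarrow> nat \<Rightarrow> nat \<Rightarrow> (nat \<Rightarrow> nat) set" where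
  "Cprime n a0 a1 = {z \<in> binseqs n. VT 0 n z mod 3 = a0 \<and> VT 1 n z mod Pn n = a1}"

definition code :: "nat \<Rightarrow> nat \<Rightarrow> nat \<Rightarrow> (nat \<Rightarrow> nat) set" where
  "code n a0 a1 = {x \<in> ALL_set n ((Pn n - 1) div 2). indicator_seq n x \<in> Cprime n a0 a1}"

end

theory Submission
  imports Defs "HOL-Real_Asymp.Real_Asymp"
begin

lemma bin01: "x \<in> binseqs n \<Longrightarrow> x i = 0 \<or> x i = 1"
  unfolding binseqs_def by (metis (mono_tags, lifting) le_SucE le_zero_eq mem_Collect_eq One_nat_def)

lemma binout: "x \<in> binseqs n \<Longrightarrow> i = 0 \<or> n < i \<Longrightarrow> x i = 0"
  unfolding binseqs_def by auto

lemma read2_eq: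
  assumes "x \<in> binseqs n" "y \<in> binseqs n"
  shows "read2 x i = read2 y i \<longleftrightarrow> x (i-1) + x i = y (i-1) + y i"
  using bin01[OF assms(1), of "i-1"] bin01[OF assms(1), of i]
        bin01[OF assms(2), of "i-1"] bin01[OF assms(2), of i]
  unfolding read2_def by (elim disjE) (simp_all add: add_mset_commute add_eq_conv_diff)

lemma dist4:
  assumes xc: "x \<in> code n a0 a1" and yc: "y \<in> code n a0 a1" and xy: "x \<noteq> y"
  shows "4 \<le> read2_dist n x y"
proof (rule ccontr)
  assume nd: "\<not> 4 \<le> read2_dist n x y"
  define P where "P = Pn n"
  define L where "L = (P - 1) div 2"
  have xA: "x \<in> ALL_set n L" and yA: "y \<in> ALL_set n L"
    using xc yc unfolding code_def L_def P_def by auto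
  have xb: "x \<in> binseqs n" and yb: "y \<in> binseqs n" using xA yA unfolding ALL_set_def by auto
  have xalt: "\<And>i j. 1 \<le> i \<Longrightarrow> i \<le> j \<Longrightarrow> j \<le> n \<Longrightarrow> alternating_block x i j \<Longrightarrow> j - i + 1 \<le> L"
    using xA unfolding ALL_set_def by blast
  define z where "z = indicator_seq n x"
  define w where "w = indicator_seq n y"
  have zC: "z \<in> Cprime n a0 a1" and wC: "w \<in> Cprime n a0 a1"
    using xc yc unfolding code_def z_def w_def by auto
  have x01: "\<And>i. x i = 0 \<or> x i = 1" using bin01[OF xb] by blast
  have y01: "\<And>i. y i = 0 \<or> y i = 1" using bin01[OF yb] by blast
  define D where "D = {i \<in> {1..n+1}. read2 x i \<noteq> read2 y i}"
  have finD: "finite D" unfolding D_def by auto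
  have cardD: "card D < 4" using nd unfolding read2_dist_def D_def by simp
  have Din: "\<And>i. 1 \<le> i \<Longrightarrow> i \<le> n+1 \<Longrightarrow> x (i-1) + x i \<noteq> y (i-1) + y i \<Longrightarrow> i \<in> D"
    unfolding D_def using read2_eq[OF xb yb] by auto
  have Dout: "\<And>i. 1 \<le> i \<Longrightarrow> i \<le> n+1 \<Longrightarrow> i \<notin> D \<Longrightarrow> x (i-1) + x i = y (i-1) + y i"
    unfolding D_def using read2_eq[OF xb yb] by auto
  have four: "False" if "a < b" "b < c" "c < d" "a \<in> D" "b \<in> D" "c \<in> D" "d \<in> D" for a b c d
  proof -
    have "card {a,b,c,d} \<le> card D" using that finD by (intro card_mono) auto
    moreover have "card {a,b,c,d} = 4" using that by auto
    ultimately show False using cardD by simp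
  qed
  define U where "U = {i. x i \<noteq> y i}"
  have Usub: "U \<subseteq> {1..n}"
  proof
    fix i assume "i \<in> U"
    then have "x i \<noteq> y i" unfolding U_def by simp
    then show "i \<in> {1..n}" using binout[OF xb, of i] binout[OF yb, of i]
      by (cases "i = 0 \<or> n < i") auto
  qed
  have finU: "finite U" using Usub finite_subset by blast
  have Une: "U \<noteq> {}" using xy unfolding U_def by auto
  define p where "p = Min U"
  define m where "m = Max U"
  have pU: "p \<in> U" and mU: "m \<in> U" using finU Une unfolding p_def m_def by auto
  have pm: "p \<le> m" using finU pU unfolding m_def by auto
  have p1: "1 \<le> p" and mn: "m \<le> n" using pU mU Usub by auto
  have below: "x i = y i" if "i < p" for i
  proof (rule ccontr)
    assume "x i \<noteq> y i" then have "i \<in> U" by (simp add: U_def)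
    then have "p \<le> i" unfolding p_def using finU by simp
    then show False using that by simp
  qed
  have above: "x i = y i" if "m < i" for i
  proof (rule ccontr)
    assume "x i \<noteq> y i" then have "i \<in> U" by (simp add: U_def)
    then have "i \<le> m" unfolding m_def using finU by simp
    then show False using that by simp
  qed
  have xpy: "x p \<noteq> y p" and xmy: "x m \<noteq> y m" using pU mU unfolding U_def by auto
  have pD: "p \<in> D"
    using Din[of p] below[of "p-1"] p1 pm mn xpy by auto
  have mD: "m+1 \<in> D"
    using Din[of "m+1"] above[of "m+1"] mn xmy by auto
  have nz: "x i \<noteq> y i" if "p \<le> i" "i \<le> m" for i
  proof (rule ccontr)
    assume "\<not> x i \<noteq> y i"
    define i0 where "i0 = (LEAST j. p \<le> j \<and> j \<le> m \<and> x j = y j)"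
    have ex0: "p \<le> i \<and> i \<le> m \<and> x i = y i" using that \<open>\<not> x i \<noteq> y i\<close> by auto
    have i0p: "p \<le> i0 \<and> i0 \<le> m \<and> x i0 = y i0" unfolding i0_def by (rule LeastI[of "\<lambda>j. p \<le> j \<and> j \<le> m \<and> x j = y j", OF ex0])
    have i0min: "\<And>j. p \<le> j \<Longrightarrow> j < i0 \<Longrightarrow> x j \<noteq> y j"
      using not_less_Least i0_def i0p by fastforce
    have pi0: "p < i0" using i0p xpy by (metis le_neq_implies_less)
    have i0m: "i0 < m" using i0p xmy by (metis le_neq_implies_less)
    have i0D: "i0 \<in> D" using Din[of i0] i0min[of "i0 - 1"] pi0 i0m mn i0p by auto
    define i1 where "i1 = (LEAST j. i0 < j \<and> x j \<noteq> y j)"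
    have ex1: "i0 < m \<and> x m \<noteq> y m" using i0m xmy by auto
    have i1p: "i0 < i1 \<and> x i1 \<noteq> y i1" unfolding i1_def by (rule LeastI[of "\<lambda>j. i0 < j \<and> x j \<noteq> y j", OF ex1])
    have i1m: "i1 \<le> m" unfolding i1_def by (rule Least_le[of "\<lambda>j. i0 < j \<and> x j \<noteq> y j", OF ex1])
    have i1prev: "x (i1 - 1) = y (i1 - 1)"
    proof (cases "i1 - 1 = i0")
      case True then show ?thesis using i0p by simp
    next
      case False
      then have "i0 < i1 - 1" "i1 - 1 < i1" using i1p by auto
      then show ?thesis using not_less_Least[of "i1 - 1" "\<lambda>j. i0 < j \<and> x j \<noteq> y j"]
        unfolding i1_def[symmetric] by blast
    qed
    have i1D: "i1 \<in> D" using Din[of i1] i1prev i1p i1m mn pi0 by auto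
    show False using four[OF pi0 _ _ pD i0D i1D mD] i1p i1m by auto
  qed
  have altstep: "x k \<noteq> x (Suc k)" if "p \<le> k" "k < m" "Suc k \<notin> D" for k
  proof -
    have a: "x k \<noteq> y k" "x (Suc k) \<noteq> y (Suc k)" using nz that by auto
    have "x k + x (Suc k) = y k + y (Suc k)" using Dout[of "Suc k"] that mn by auto
    then show ?thesis using a x01[of k] x01[of "Suc k"] y01[of k] y01[of "Suc k"] by auto
  qed
  have len: "m + 1 - p \<le> 2 * L"
  proof (cases "\<exists>q. p < q \<and> q \<le> m \<and> q \<in> D")
    case False
    have "alternating_block x p m" unfolding alternating_block_def
      using altstep False by (metis Suc_le_eq le_imp_less_Suc less_SucI nat_less_le)
    then have "m - p + 1 \<le> L" using xalt p1 pm mn by blast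
    then show ?thesis using pm by linarith
  next
    case True
    then obtain q where q: "p < q" "q \<le> m" "q \<in> D" by blast
    have uq: "q' = q" if "p < q'" "q' \<le> m" "q' \<in> D" for q'
    proof (rule ccontr)
      assume "q' \<noteq> q"
      then show False
      proof (cases "q' < q")
        case True then show ?thesis using four[OF \<open>p < q'\<close> True _ pD \<open>q' \<in> D\<close> q(3) mD] q by linarith
      next
        case False then have "q < q'" using \<open>q' \<noteq> q\<close> by linarith
        then show ?thesis using four[OF q(1) \<open>q < q'\<close> _ pD q(3) \<open>q' \<in> D\<close> mD] that by linarith
      qed
    qed
    have "alternating_block x p (q - 1)" unfolding alternating_block_def
    proof (intro allI impI)
      fix k assume k: "p \<le> k \<and> k < q - 1"
      then have "Suc k \<notin> D" using uq[of "Suc k"] q by fastforce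
      then show "x k \<noteq> x (Suc k)" using altstep k q by auto
    qed
    then have l1: "q - 1 - p + 1 \<le> L" using xalt[of p "q-1"] p1 q mn by auto
    have "alternating_block x q m" unfolding alternating_block_def
    proof (intro allI impI)
      fix k assume k: "q \<le> k \<and> k < m"
      then have "Suc k \<notin> D" using uq[of "Suc k"] q by fastforce
      then show "x k \<noteq> x (Suc k)" using altstep k q by auto
    qed
    then have l2: "m - q + 1 \<le> L" using xalt[of q m] p1 q mn by auto
    show ?thesis using l1 l2 q by linarith
  qed
  have LP: "2 * L \<le> P - 1" unfolding L_def by simp
  have zeq: "z i = w i" if "1 \<le> i" "i \<le> n" "i \<noteq> p" "i \<noteq> m+1" for i
  proof -
    have "(x (i-1) + x i) mod 2 = (y (i-1) + y i) mod 2"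
    proof (cases "i < p \<or> m + 1 < i")
      case True
      then have "x (i-1) = y (i-1)" "x i = y i" using below above by auto
      then show ?thesis by simp
    next
      case False
      then have "p < i" "i \<le> m" using that by auto
      then have "x (i-1) \<noteq> y (i-1)" "x i \<noteq> y i" using nz by auto
      then show ?thesis using x01[of i] x01[of "i-1"] y01[of i] y01[of "i-1"] by auto
    qed
    then show ?thesis unfolding z_def w_def indicator_seq_def using that by (simp add: add.commute)
  qed
  have zp: "z p \<noteq> w p"
  proof -
    have "x (p-1) = y (p-1)" using below p1 by auto
    then have "(x (p-1) + x p) mod 2 \<noteq> (y (p-1) + y p) mod 2"
      using xpy x01[of p] y01[of p] y01[of "p-1"] by auto
    then show ?thesis unfolding z_def w_def indicator_seq_def using p1 pm mn by (simp add: add.commute)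
  qed
  have zm: "z (m+1) \<noteq> w (m+1)" if "m + 1 \<le> n"
  proof -
    have "x (m+1) = y (m+1)" using above by auto
    then have "(x (m+1-1) + x (m+1)) mod 2 \<noteq> (y (m+1-1) + y (m+1)) mod 2"
      using xmy x01[of m] y01[of m] y01[of "m+1"] by auto
    then show ?thesis unfolding z_def w_def indicator_seq_def using that by (simp add: add.commute)
  qed
  have z01: "\<And>i. z i = 0 \<or> z i = 1" unfolding z_def indicator_seq_def by auto
  have w01: "\<And>i. w i = 0 \<or> w i = 1" unfolding w_def indicator_seq_def by auto
  define e where "e i = int (z i) - int (w i)" for i
  have ep: "e p = 1 \<or> e p = -1" using zp z01[of p] w01[of p] unfolding e_def by auto
  have em: "m + 1 \<le> n \<Longrightarrow> e (m+1) = 1 \<or> e (m+1) = -1"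
    using zm z01[of "m+1"] w01[of "m+1"] unfolding e_def by auto
  have ez: "\<And>i. i \<in> {1..n} - ({1..n} \<inter> {p, m+1}) \<Longrightarrow> int (i^k) * e i = 0" for k
    using zeq unfolding e_def by auto
  have VTd: "int (VT k n z) - int (VT k n w) = (\<Sum>i\<in>{1..n} \<inter> {p, m+1}. int (i^k) * e i)" for k
  proof -
    have "int (VT k n z) - int (VT k n w) = (\<Sum>i\<in>{1..n}. int (i^k) * e i)"
      unfolding VT_def e_def by (simp add: sum_subtractf algebra_simps)
    also have "\<dots> = (\<Sum>i\<in>{1..n} \<inter> {p, m+1}. int (i^k) * e i)"
      by (rule sum.mono_neutral_right) (use ez in auto)
    finally show ?thesis .
  qed
  have d3: "(3::int) dvd (int (VT 0 n z) - int (VT 0 n w))"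
  proof -
    have "VT 0 n z mod 3 = VT 0 n w mod 3" using zC wC unfolding Cprime_def by auto
    then have "int (VT 0 n z) mod 3 = int (VT 0 n w) mod 3" by (metis of_nat_mod of_nat_numeral)
    then show ?thesis by (simp add: mod_eq_dvd_iff)
  qed
  have dP: "int P dvd (int (VT 1 n z) - int (VT 1 n w))"
  proof -
    have "VT 1 n z mod P = VT 1 n w mod P" using zC wC unfolding Cprime_def P_def by auto
    then have "int (VT 1 n z) mod int P = int (VT 1 n w) mod int P" by (metis of_nat_mod)
    then show ?thesis by (simp add: mod_eq_dvd_iff)
  qed
  show False
  proof (cases "m + 1 \<le> n")
    case False
    then have "{1..n} \<inter> {p, m+1} = {p}" using p1 pm mn by auto
    then have "int (VT 0 n z) - int (VT 0 n w) = e p" using VTd[of 0] by simp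
    then show False using d3 ep by auto
  next
    case True
    then have S: "{1..n} \<inter> {p, m+1} = {p, m+1}" using p1 pm by auto
    have "int (VT 0 n z) - int (VT 0 n w) = e p + e (m+1)" using VTd[of 0] S pm by simp
    then have "e (m+1) = - e p" using d3 ep em[OF True] by auto
    moreover have "int (VT 1 n z) - int (VT 1 n w) = int p * e p + int (m+1) * e (m+1)"
      using VTd[of 1] S pm by simp
    ultimately have "int (VT 1 n z) - int (VT 1 n w) = - e p * int (m + 1 - p)"
      using pm by (simp add: algebra_simps of_nat_diff)
    then have "int P dvd int (m + 1 - p)" using dP ep
      by (metis dvd_minus_iff minus_mult_left mult_1 mult_minus1)
    then have "P dvd (m + 1 - p)" by simp
    then have "P \<le> m + 1 - p" using pm by (intro dvd_imp_le) auto
    then show False using len LP pm by linarith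
  qed
qed

definition gS :: "nat set \<Rightarrow> nat \<Rightarrow> nat" where "gS S = (\<lambda>i. if i \<in> S then 1 else 0)"

lemma binseqs_eq: "binseqs m = gS ` Pow {1..m}"
proof
  show "gS ` Pow {1..m} \<subseteq> binseqs m" unfolding gS_def binseqs_def by auto
next
  show "binseqs m \<subseteq> gS ` Pow {1..m}"
  proof
    fix x assume x: "x \<in> binseqs m"
    have "x = gS {i \<in> {1..m}. x i = 1}"
    proof
      fix i show "x i = gS {i \<in> {1..m}. x i = 1} i"
        using bin01[OF x, of i] binout[OF x, of i] unfolding gS_def
        by (cases "i = 0 \<or> m < i") auto
    qed
    then show "x \<in> gS ` Pow {1..m}" by blast
  qed
qed

lemma inj_gS: "inj_on gS (Pow {1..m})"
proof (rule inj_onI)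
  fix S T assume "gS S = gS T"
  then have "\<And>i. gS S i = gS T i" by simp
  then show "S = T" unfolding gS_def by (metis one_neq_zero subsetI subset_antisym)
qed

lemma card_binseqs: "card (binseqs m) = 2 ^ m"
  using card_image[OF inj_gS[of m]] by (simp add: binseqs_eq card_Pow)

lemma finite_binseqs: "finite (binseqs m)"
  by (simp add: binseqs_eq)

lemma alt_val:
  assumes x: "x \<in> binseqs n" and a: "alternating_block x i j"
  shows "t \<le> j - i \<Longrightarrow> x (i + t) = (x i + t) mod 2"
proof (induction t)
  case 0 then show ?case using bin01[OF x, of i] by auto
next
  case (Suc t)
  then have "x (i + t) \<noteq> x (Suc (i + t))" using a unfolding alternating_block_def by auto
  moreover have "x (i + t) = (x i + t) mod 2" using Suc by simp
  moreover have "(x i + Suc t) mod 2 = 1 - (x i + t) mod 2"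
    by (cases "even (x i + t)") (auto simp: odd_iff_mod_2_eq_one even_iff_mod_2_eq_zero mod_Suc)
  ultimately show ?case using bin01[OF x, of "i + Suc t"] bin01[OF x, of "i + t"] by auto
qed

lemma card_B:
  assumes "i + L \<le> n"
  shows "card {x \<in> binseqs n. alternating_block x i (i+L)} \<le> 2^(n-L)"
proof -
  define B where "B = {x \<in> binseqs n. alternating_block x i (i+L)}"
  define h where "h x = (\<lambda>j. if j \<le> i then x j else x (j+L))" for x :: "nat \<Rightarrow> nat"
  have img: "h ` B \<subseteq> binseqs (n-L)"
  proof
    fix y assume "y \<in> h ` B"
    then obtain x where x: "x \<in> B" "y = h x" by blast
    have xb: "x \<in> binseqs n" using x unfolding B_def by simp
    show "y \<in> binseqs (n-L)" unfolding binseqs_def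
    proof (intro CollectI conjI allI impI)
      fix j
      have yj: "y j = (if j \<le> i then x j else x (j+L))" using x(2) h_def by simp
      have xle: "\<And>k. x k \<le> 1" using xb unfolding binseqs_def by simp
      show "y j \<le> 1" unfolding yj using xle by simp
    next
      fix j assume j: "j = 0 \<or> n - L < j"
      have yj: "y j = (if j \<le> i then x j else x (j+L))" using x(2) h_def by simp
      show "y j = 0"
      proof (cases "j = 0")
        case True then show ?thesis unfolding yj using binout[OF xb, of 0] by simp
      next
        case False
        then have "i < j" "n < j + L" using j assms by auto
        then show ?thesis unfolding yj using binout[OF xb, of "j+L"] by simp
      qed
    qed
  qed
  have inj: "inj_on h B"
  proof (rule inj_onI)
    fix x y assume xB: "x \<in> B" and yB: "y \<in> B" and hxy: "h x = h y"
    have xb: "x \<in> binseqs n" and xa: "alternating_block x i (i+L)" using xB unfolding B_def by auto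
    have yb: "y \<in> binseqs n" and ya: "alternating_block y i (i+L)" using yB unfolding B_def by auto
    have hx: "\<And>j. h x j = h y j" using hxy by simp
    show "x = y"
    proof
      fix k
      show "x k = y k"
      proof (cases "k \<le> i")
        case True then show ?thesis using hx[of k] unfolding h_def by simp
      next
        case False
        show ?thesis
        proof (cases "k \<le> i + L")
          case True
          have "x (i + (k - i)) = (x i + (k-i)) mod 2" using alt_val[OF xb xa] True by simp
          moreover have "y (i + (k - i)) = (y i + (k-i)) mod 2" using alt_val[OF yb ya] True by simp
          moreover have "x i = y i" using hx[of i] unfolding h_def by simp
          ultimately show ?thesis using False by simp
        next
          case F2: False
          have "h x (k - L) = h y (k - L)" by (rule hx)
          then show ?thesis using F2 unfolding h_def by (simp split: if_splits)
        qed
      qed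
    qed
  qed
  have "card B \<le> card (binseqs (n-L))"
    by (rule card_inj_on_le[OF inj img finite_binseqs])
  then show ?thesis unfolding B_def card_binseqs .
qed

lemma bad_sub: "binseqs n - ALL_set n L \<subseteq> (\<Union>i\<in>{1..n-L}. {x \<in> binseqs n. alternating_block x i (i+L)})"
proof
  fix x assume x: "x \<in> binseqs n - ALL_set n L"
  then obtain i j where ij: "1 \<le> i" "i \<le> j" "j \<le> n" "alternating_block x i j" "\<not> j - i + 1 \<le> L"
    unfolding ALL_set_def by blast
  have "alternating_block x i (i+L)" using ij(4,5) unfolding alternating_block_def by auto
  moreover have "i \<in> {1..n-L}" using ij by auto
  ultimately show "x \<in> (\<Union>i\<in>{1..n-L}. {x \<in> binseqs n. alternating_block x i (i+L)})"
    using x by blast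
qed

lemma card_ALL: "2^n \<le> card (ALL_set n L) + (n - L) * 2^(n-L)"
proof -
  have sub: "ALL_set n L \<subseteq> binseqs n" unfolding ALL_set_def by auto
  have "card (binseqs n) = card (ALL_set n L) + card (binseqs n - ALL_set n L)"
    using card_Diff_subset[OF finite_subset[OF sub finite_binseqs] sub]
      card_mono[OF finite_binseqs sub] by simp
  moreover have "card (binseqs n - ALL_set n L) \<le> (n - L) * 2^(n-L)"
  proof -
    have "card (binseqs n - ALL_set n L) \<le> card (\<Union>i\<in>{1..n-L}. {x \<in> binseqs n. alternating_block x i (i+L)})"
      by (rule card_mono[OF _ bad_sub]) (auto intro: finite_subset[OF _ finite_binseqs])
    also have "\<dots> \<le> (\<Sum>i\<in>{1..n-L}. card {x \<in> binseqs n. alternating_block x i (i+L)})"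
      by (rule card_UN_le) simp
    also have "\<dots> \<le> (\<Sum>i\<in>{1..n-L}. 2^(n-L))"
      by (rule sum_mono) (rule card_B, auto)
    also have "\<dots> = (n - L) * 2^(n-L)" by simp
    finally show ?thesis .
  qed
  ultimately show ?thesis using card_binseqs[of n] by linarith
qed

lemma pigeon:
  assumes P0: "0 < Pn n"
  shows "\<exists>a0 a1. a0 \<le> 2 \<and> a1 \<le> Pn n - 1 \<and>
     real (card (ALL_set n ((Pn n - 1) div 2))) \<le> 3 * real (Pn n) * real (card (code n a0 a1))"
proof (rule ccontr)
  assume H: "\<not> ?thesis"
  define P where "P = Pn n"
  define A where "A = ALL_set n ((Pn n - 1) div 2)"
  define I where "I = {0..(2::nat)} \<times> {0..<P}"
  define c where "c a = card (code n (fst a) (snd a))" for a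
  have finI: "finite I" and cardI: "card I = 3 * P" unfolding I_def by auto
  have lt: "3 * real P * real (c a) < real (card A)" if "a \<in> I" for a
  proof (cases a)
    case (Pair a0 a1)
    with that have "a0 \<le> 2" "a1 \<le> Pn n - 1" unfolding I_def P_def by auto
    then have "\<not> real (card A) \<le> 3 * real P * real (c a)"
      using H Pair unfolding c_def A_def P_def by auto
    then show ?thesis by simp
  qed
  have sub: "A \<subseteq> (\<Union>a\<in>I. code n (fst a) (snd a))"
  proof
    fix x assume xA: "x \<in> A"
    define z where "z = indicator_seq n x"
    have zb: "z \<in> binseqs n" unfolding z_def indicator_seq_def binseqs_def by auto
    have "x \<in> code n (VT 0 n z mod 3) (VT 1 n z mod P)"
      using xA zb unfolding code_def Cprime_def A_def z_def P_def by auto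
    moreover have "(VT 0 n z mod 3, VT 1 n z mod P) \<in> I" unfolding I_def using P0 P_def by auto
    ultimately show "x \<in> (\<Union>a\<in>I. code n (fst a) (snd a))" by force
  qed
  have "card A \<le> card (\<Union>a\<in>I. code n (fst a) (snd a))"
    by (rule card_mono[OF _ sub]) (use finI in \<open>auto intro: finite_subset[OF _ finite_binseqs] simp: code_def ALL_set_def\<close>)
  also have "\<dots> \<le> (\<Sum>a\<in>I. c a)" unfolding c_def by (rule card_UN_le[OF finI])
  finally have "real (card A) \<le> (\<Sum>a\<in>I. real (c a))" by (metis of_nat_le_iff of_nat_sum)
  then have "3 * real P * real (card A) \<le> 3 * real P * (\<Sum>a\<in>I. real (c a))"
    by (intro mult_left_mono) auto
  also have "\<dots> = (\<Sum>a\<in>I. 3 * real P * real (c a))" by (simp add: sum_distrib_left)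
  also have "\<dots> < (\<Sum>a\<in>I. real (card A))"
  proof (rule sum_strict_mono[OF finI])
    show "I \<noteq> {}" using cardI P0 P_def by (metis card.empty mult_is_0 neq0_conv zero_neq_numeral)
    show "\<And>a. a \<in> I \<Longrightarrow> 3 * real P * real (c a) < real (card A)" by (rule lt)
  qed
  also have "\<dots> = 3 * real P * real (card A)" using cardI by simp
  finally show False by (meson less_irrefl)
qed

lemma bound:
  assumes n4: "4 \<le> n"
  shows "\<exists>a0 a1. a0 \<le> 2 \<and> a1 \<le> Pn n - 1 \<and>
    redundancy n (code n a0 a1) \<le> log 2 (log 2 (real n)) + log 2 6 +
      (log 2 (1 + (log 2 (log 2 (real n)) + 3/2) / log 2 (real n)) - log 2 (1 - 1 / log 2 (real n)))"
proof -
  define l where "l = log 2 (real n)"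
  define ll where "ll = log 2 l"
  define c where "c = \<lceil>l + ll\<rceil>"
  have l2: "2 \<le> l"
  proof -
    have "log 2 (4::real) \<le> l" unfolding l_def using n4 by (subst log_le_cancel_iff) auto
    moreover have "log 2 (4::real) = 2"
      using log_pow_cancel[of "2::real" 2] by simp
    ultimately show ?thesis by simp
  qed
  have ll1: "1 \<le> ll"
  proof -
    have "log 2 (2::real) \<le> log 2 l" using l2 by (subst log_le_cancel_iff) auto
    then show ?thesis unfolding ll_def by simp
  qed
  have c0: "0 \<le> c" unfolding c_def using l2 ll1 by linarith
  have cge: "l + ll \<le> real_of_int c" unfolding c_def by simp
  have cle: "real_of_int c \<le> l + ll + 1" unfolding c_def by linarith
  define L where "L = nat c"
  have PnL: "Pn n = 2 * L + 1" unfolding Pn_def L_def c_def l_def ll_def using c0[unfolded c_def l_def ll_def]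
    by (simp add: nat_add_distrib nat_mult_distrib)
  have LL: "(Pn n - 1) div 2 = L" unfolding PnL by simp
  have realL: "real L = real_of_int c" unfolding L_def using c0 by simp
  have pow: "real n * l \<le> 2 ^ L"
  proof -
    have "real n * l = 2 powr (l + ll)"
      unfolding powr_add l_def ll_def using n4 l2 l_def by simp
    also have "\<dots> \<le> 2 powr (real L)" using cge realL by (intro powr_mono) auto
    also have "\<dots> = 2 ^ L" by (simp add: powr_realpow)
    finally show ?thesis .
  qed
  have cardA: "2 ^ n * (1 - 1 / l) \<le> real (card (ALL_set n L))"
  proof -
    have h: "2^n \<le> card (ALL_set n L) + (n - L) * 2^(n-L)" by (rule card_ALL)
    have "real (n - L) * 2 ^ (n - L) \<le> 2 ^ n / l"
    proof (cases "L \<le> n")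
      case True
      have e: "(2::real) ^ (n - L) = 2 ^ n / 2 ^ L" using True by (simp add: power_diff)
      have "real (n - L) * 2 ^ (n - L) \<le> real n * (2 ^ n / 2 ^ L)"
        unfolding e using True by (intro mult_right_mono) auto
      also have "\<dots> = 2 ^ n * (real n / 2 ^ L)" by simp
      also have "\<dots> \<le> 2 ^ n * (1 / l)"
      proof (intro mult_left_mono)
        show "real n / 2 ^ L \<le> 1 / l" using pow l2 n4
          by (simp add: divide_simps)
      qed auto
      finally show ?thesis by simp
    next
      case False then show ?thesis using l2 by simp
    qed
    moreover have "(2::real) ^ n \<le> real (card (ALL_set n L)) + real (n - L) * 2 ^ (n - L)"
      using h by (metis (mono_tags, lifting) of_nat_add of_nat_le_iff of_nat_mult of_nat_numeral of_nat_power)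
    ultimately show ?thesis by (simp add: algebra_simps)
  qed
  have P0: "0 < Pn n" unfolding PnL by simp
  obtain a0 a1 where a: "a0 \<le> 2" "a1 \<le> Pn n - 1"
    and pig: "real (card (ALL_set n L)) \<le> 3 * real (Pn n) * real (card (code n a0 a1))"
    using pigeon[OF P0] unfolding LL by blast
  define K where "K = real (card (code n a0 a1))"
  define Q where "Q = 3 * real (Pn n)"
  have Q0: "0 < Q" unfolding Q_def using P0 by simp
  have pos: "0 < 1 - 1 / l" using l2 by simp
  have lowK: "2 ^ n * (1 - 1 / l) / Q \<le> K"
    using cardA pig Q0 unfolding K_def Q_def by (simp add: divide_simps mult.commute)
  have lowpos: "0 < 2 ^ n * (1 - 1 / l) / Q" using pos Q0 by simp
  have "log 2 (2 ^ n * (1 - 1 / l) / Q) \<le> log 2 K"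
    using lowK lowpos by (subst log_le_cancel_iff) auto
  moreover have "log 2 (2 ^ n * (1 - 1 / l) / Q) = real n + log 2 (1 - 1/l) - log 2 Q"
    using pos Q0 by (simp add: log_divide_pos log_mult_pos)
  ultimately have red: "redundancy n (code n a0 a1) \<le> log 2 Q - log 2 (1 - 1 / l)"
    unfolding redundancy_def K_def by linarith
  have Qle: "Q \<le> 6 * (l * (1 + (ll + 3/2) / l))"
  proof -
    have "Q = 6 * real_of_int c + 3" unfolding Q_def PnL using realL by simp
    also have "\<dots> \<le> 6 * (l + ll + 1) + 3" using cle by simp
    also have "\<dots> = 6 * (l * (1 + (ll + 3/2) / l))" using l2 by (simp add: field_simps)
    finally show ?thesis .
  qed
  have pos2: "0 < 1 + (ll + 3/2) / l" using l2 ll1 by (simp add: add_pos_nonneg)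
  have "log 2 Q \<le> log 2 (6 * (l * (1 + (ll + 3/2) / l)))"
    using Qle Q0 by (subst log_le_cancel_iff) auto
  also have "\<dots> = log 2 6 + ll + log 2 (1 + (ll + 3/2) / l)"
    using pos2 l2 unfolding ll_def by (simp add: log_mult_pos)
  finally have "log 2 Q \<le> log 2 6 + ll + log 2 (1 + (ll + 3/2) / l)" .
  with red a show ?thesis unfolding l_def[symmetric] ll_def[symmetric] by (intro exI[of _ a0] exI[of _ a1]) auto
qed

lemma eps_lim_real:
  "((\<lambda>x::real. log 2 (1 + (log 2 x + 3/2) / x) - log 2 (1 - 1 / x)) \<longlongrightarrow> 0) at_top"
  by real_asymp

lemma log_seq_top: "filterlim (\<lambda>n::nat. log 2 (real n)) at_top sequentially"
  by real_asymp

theorem theorem10: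
  shows "(\<forall>n a0 a1. 1 \<le> n \<and> a0 \<le> 2 \<and> a1 \<le> Pn n - 1 \<longrightarrow> two_read_code n 4 (code n a0 a1))
       \<and> (\<exists>\<epsilon> :: nat \<Rightarrow> real. \<epsilon> \<longlonglongrightarrow> 0 \<and>
            (\<forall>\<^sub>F n in sequentially. \<exists>a0 a1. a0 \<le> 2 \<and> a1 \<le> Pn n - 1 \<and>
               redundancy n (code n a0 a1) \<le> log 2 (log 2 (real n)) + log 2 6 + \<epsilon> n))"
proof (intro conjI allI impI)
  fix n a0 a1 :: nat
  show "two_read_code n 4 (code n a0 a1)"
    unfolding two_read_code_def
  proof (intro conjI ballI impI)
    show "code n a0 a1 \<subseteq> binseqs n" unfolding code_def ALL_set_def by auto
  next
    fix x y assume "x \<in> code n a0 a1" "y \<in> code n a0 a1" "x \<noteq> y"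
    then show "4 \<le> read2_dist n x y" by (rule dist4)
  qed
next
  define \<epsilon> where "\<epsilon> n = log 2 (1 + (log 2 (log 2 (real n)) + 3/2) / log 2 (real n)) - log 2 (1 - 1 / log 2 (real n))" for n :: nat
  show "\<exists>\<epsilon> :: nat \<Rightarrow> real. \<epsilon> \<longlonglongrightarrow> 0 \<and>
            (\<forall>\<^sub>F n in sequentially. \<exists>a0 a1. a0 \<le> 2 \<and> a1 \<le> Pn n - 1 \<and>
               redundancy n (code n a0 a1) \<le> log 2 (log 2 (real n)) + log 2 6 + \<epsilon> n)"
  proof (intro exI[of _ \<epsilon>] conjI)
    show "\<epsilon> \<longlonglongrightarrow> 0"
      unfolding \<epsilon>_def using filterlim_compose[OF eps_lim_real log_seq_top] by simp
    show "\<forall>\<^sub>F n in sequentially. \<exists>a0 a1. a0 \<le> 2 \<and> a1 \<le> Pn n - 1 \<and>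
               redundancy n (code n a0 a1) \<le> log 2 (log 2 (real n)) + log 2 6 + \<epsilon> n"
      by (rule eventually_sequentiallyI[of 4]) (unfold \<epsilon>_def, rule bound)
  qed
qed

end
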